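(* Let $n\geq 2$ be even. (i) $\mu^+(A_n)\leq\mu^+(G)$ for every threshold graph $G$ on $n$ vertices. (ii) $\mu^-(G)\leq\mu^-(A_n)$ for every threshold graph $G$ on $n$ vertices with binary string $b=0^{s_1}1^{t_1}\cdots0^{s_k}1^{t_k}$ with $s_1=1$. (iii) $\mu^-(G)\leq\mu^-(A_n)$ for every threshold graph $G$ on $n$ vertices with binary string $b=0^{s_1}1^{t_1}\cdots0^{s_k}1^{t_k}$ with $s_1\geq 2$ and $2k+2<n$.
   Context: Eigenvalues of a graph are those of its $(0,1)$-adjacency matrix. For a graph $H$, $\mu^-(H)$ is the largest eigenvalue of $H$ less than $-1$ and $\mu^+(H)$ is the smallest positive eigenvalue of $H$. Threshold graphs from binary strings: given $b=b_1\cdots b_n\in\{0,1\}^n$ with $b_1=0$, start with a single vertex and for $j=2,\ldots,n$ add a new vertex adjacent to all previous vertices if $b_j=1$ and isolated if $b_j=0$; the result is $G(b)$, and $b$ is its binary string. $0^s$ (resp. $1^t$) denotes $s\geq1$ consecutive zeros (resp. $t\geq1$ ones). The anti-regular graph $A_m$ is $G(b)$ with $b=0101\cdots01$ (length $m$) for $m$ even and $b=00101\cdots01$ (length $m$) for $m$ odd. *)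

theory Defs
  imports Complex_Main "Jordan_Normal_Form.Char_Poly"
begin

text \<open>Binary strings are bool lists (True = 1, False = 0); vertex j (0-based) is the
  vertex added at step j+1.  Vertices i < j are adjacent iff b_j = 1.\<close>

definition threshold_adj :: "bool list \<Rightarrow> nat \<Rightarrow> nat \<Rightarrow> bool" where
  "threshold_adj b i j = (i \<noteq> j \<and> b ! (max i j))"

definition threshold_adj_mat :: "bool list \<Rightarrow> real mat" where
  "threshold_adj_mat b = mat (length b) (length b)
     (\<lambda>(i, j). if threshold_adj b i j then 1 else 0)"

definition is_threshold_string :: "bool list \<Rightarrow> bool" where
  "is_threshold_string b = (b \<noteq> [] \<and> b ! 0 = False)"

definition graph_eigenvalue :: "bool list \<Rightarrow> real \<Rightarrow> bool" where
  "graph_eigenvalue b x = eigenvalue (threshold_adj_mat b) x"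

definition mu_plus :: "bool list \<Rightarrow> real" where
  "mu_plus b = Min {x. graph_eigenvalue b x \<and> x > 0}"

definition mu_minus :: "bool list \<Rightarrow> real" where
  "mu_minus b = Max {x. graph_eigenvalue b x \<and> x < -1}"

definition antiregular_string :: "nat \<Rightarrow> bool list" where
  "antiregular_string m =
     (if even m then concat (replicate (m div 2) [False, True])
      else False # concat (replicate (m div 2) [False, True]))"

text \<open>b = 0^{s_1} 1^{t_1} ... 0^{s_k} 1^{t_k} with all s_i, t_i \<ge> 1 and k \<ge> 1
  (blocks indexed 0..k-1 here).\<close>
definition block_string :: "nat \<Rightarrow> (nat \<Rightarrow> nat) \<Rightarrow> (nat \<Rightarrow> nat) \<Rightarrow> bool list" where
  "block_string k s t = concat (map (\<lambda>i. replicate (s i) False @ replicate (t i) True) [0..<k])"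

definition block_form :: "bool list \<Rightarrow> nat \<Rightarrow> (nat \<Rightarrow> nat) \<Rightarrow> (nat \<Rightarrow> nat) \<Rightarrow> bool" where
  "block_form b k s t = (k \<ge> 1 \<and> (\<forall>i<k. s i \<ge> 1 \<and> t i \<ge> 1) \<and> b = block_string k s t)"

end

theory Submission
  imports Defs
begin

definition fmap :: "real \<Rightarrow> bool \<Rightarrow> real \<Rightarrow> real" where
  "fmap x \<beta> c = (if \<beta> then - ((x + 2) * c + 1) / (c - x) else - x * c / (c - x))"

fun run :: "real \<Rightarrow> real \<Rightarrow> bool list \<Rightarrow> real" where
  "run x c [] = c"
| "run x c (\<beta> # L) = run x (fmap x \<beta> c) L"

fun ok :: "real \<Rightarrow> real \<Rightarrow> bool list \<Rightarrow> bool" where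
  "ok x c [] = True"
| "ok x c (\<beta> # L) = (c \<noteq> x \<and> ok x (fmap x \<beta> c) L)"

fun starts :: "bool \<Rightarrow> bool list \<Rightarrow> nat" where
  "starts p [] = 0"
| "starts p (\<beta> # L) = (if \<beta> \<and> \<not> p then 1 else 0) + starts \<beta> L"

lemma run_snoc: "run x c (L @ [\<beta>]) = fmap x \<beta> (run x c L)"
  by (induction L arbitrary: c) auto

lemma ok_snoc: "ok x c (L @ [\<beta>]) = (ok x c L \<and> run x c L \<noteq> x)"
  by (induction L arbitrary: c) auto

lemma starts_bound: "starts p L \<le> (length L + (if p then 0 else 1)) div 2"
proof (induction L arbitrary: p)
  case Nil then show ?case by simp
next
  case (Cons \<beta> L)
  from Cons.IH[of \<beta>] show ?case by (cases \<beta>; cases p; auto)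
qed

lemma neg_frac: "- (a::real) / (c - x) = a / (x - c)"
  by (metis divide_minus_left divide_minus_right minus_diff_eq)

lemma f1_lt: "fmap x True c = ((x + 2) * c + 1) / (x - c)"
  unfolding fmap_def using neg_frac[of "(x + 2) * c + 1" c x] by (simp only: if_True)

lemma f0_lt: "fmap x False c = (x * c) / (x - c)"
  unfolding fmap_def using neg_frac[of "x * c" c x] by (simp only: if_False mult_minus_left)

lemma fle: "(p::real) > 0 \<Longrightarrow> q > 0 \<Longrightarrow> a * q \<le> b * p \<Longrightarrow> a / p \<le> b / q"
  by (simp add: divide_simps)

lemma F1: assumes "x > 0" "z \<le> c" "c \<le> 0" shows "fmap x True z \<le> fmap x True c"
proof -
  have e: "((x + 2) * c + 1) * (x - z) - ((x + 2) * z + 1) * (x - c) = (x+1)^2 * (c - z)"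
    by (simp add: algebra_simps power2_eq_square)
  have "(x+1)^2 * (c - z) \<ge> 0" using assms by simp
  then have "((x + 2) * z + 1) * (x - c) \<le> ((x + 2) * c + 1) * (x - z)" using e by linarith
  then have "((x + 2) * z + 1) / (x - z) \<le> ((x + 2) * c + 1) / (x - c)"
    using assms by (intro fle) auto
  then show ?thesis using assms by (simp add: f1_lt)
qed

lemma F2: assumes "x > 0" "w > x" "c \<ge> w" shows "fmap x False w \<le> fmap x False c" "fmap x False c < 0"
proof -
  have "(- x * w) * (c - x) \<le> (- x * c) * (w - x)"
  proof -
    have "(- x * c) * (w - x) - (- x * w) * (c - x) = x * x * (c - w)" by (simp add: algebra_simps)
    moreover have "x * x * (c - w) \<ge> 0" using assms by simp
    ultimately show ?thesis by linarith
  qed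
  then show "fmap x False w \<le> fmap x False c" unfolding fmap_def using assms by (simp add: fle)
  have "- x * c < 0" using assms by simp
  then have "- x * c / (c - x) < 0" using assms by (intro divide_neg_pos) auto
  then show "fmap x False c < 0" unfolding fmap_def by (simp only: if_False)
qed

lemma f1_plus1: "c \<noteq> x \<Longrightarrow> fmap x True c + 1 = - (x + 1) * (c + 1) / (c - x)"
  unfolding fmap_def by (simp add: field_simps) 

lemma F3: assumes "x > 0" "c > x" shows "fmap x True c \<le> -1"
proof -
  have "(x + 1) * (c + 1) \<ge> 0" using assms by simp
  then have "- (x + 1) * (c + 1) \<le> 0" by (simp only: mult_minus_left)
  then have "- (x + 1) * (c + 1) / (c - x) \<le> 0" using assms
    by (intro divide_nonpos_pos) auto
  then show ?thesis using f1_plus1[of c x] assms by simp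
qed

lemma F4: assumes "x > 0" "c \<le> -1" shows "fmap x True c \<le> -1"
proof -
  have "- (x + 1) * (c + 1) \<ge> 0" using assms by (simp add: mult_nonpos_nonpos)
  then have "- (x + 1) * (c + 1) / (c - x) \<le> 0" using assms
    by (intro divide_nonneg_neg) auto
  then show ?thesis using f1_plus1[of c x] assms by simp
qed

lemma F5: assumes "x > 0" "c \<le> -1" shows "- x < fmap x False c" "fmap x False c \<le> 0"
proof -
  have eq: "fmap x False c = x * c / (x - c)" using assms by (simp add: f0_lt)
  have p: "x - c > 0" using assms by simp
  have "(- x) * (x - c) < x * c" using assms by (simp add: algebra_simps)
  then have "- x < x * c / (x - c)" using p by (simp only: pos_less_divide_eq)
  then show "- x < fmap x False c" using eq by simp
  have "x * c \<le> 0" using assms by (intro mult_nonneg_nonpos) auto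
  then have "x * c / (x - c) \<le> 0" using p by (intro divide_nonpos_pos) auto
  then show "fmap x False c \<le> 0" using eq by simp
qed

lemma F6: assumes "x > 0" "w > x" shows "fmap x False w < - x"
proof -
  have p: "w - x > 0" using assms by simp
  have "x * (w - x) < x * w" using assms by (simp add: algebra_simps)
  then have "x < x * w / (w - x)" using p by (simp only: pos_less_divide_eq)
  then show ?thesis unfolding fmap_def by simp
qed

lemma F7: assumes "x > 0" "c \<le> 0" shows "c \<le> fmap x False c" "fmap x False c \<le> 0"
proof -
  have eq: "fmap x False c = x * c / (x - c)" using assms by (simp add: f0_lt)
  have p: "x - c > 0" using assms by simp
  have "c * (x - c) \<le> x * c" using assms by (simp add: algebra_simps)
  then have "c \<le> x * c / (x - c)" using p by (simp only: pos_le_divide_eq)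
  then show "c \<le> fmap x False c" using eq by simp
  have "x * c \<le> 0" using assms by (intro mult_nonneg_nonpos) auto
  then have "x * c / (x - c) \<le> 0" using p by (intro divide_nonpos_pos) auto
  then show "fmap x False c \<le> 0" using eq by simp
qed

definition st :: "real \<Rightarrow> (nat \<Rightarrow> real) \<Rightarrow> (nat \<Rightarrow> real) \<Rightarrow> nat \<Rightarrow> bool \<Rightarrow> real \<Rightarrow> bool" where
  "st x z w j p c = (if \<not> p then z j \<le> c \<and> c \<le> 0
     else if j = 0 then c = -1 \<and> z 0 = fmap x False (-1)
     else c \<le> -1 \<or> w (j - 1) \<le> c)"

lemma f1_m1: "x > 0 \<Longrightarrow> fmap x True (-1) = -1"
proof -
  assume "x > 0"
  then have "-1 - x \<noteq> 0" by simp
  then show ?thesis unfolding fmap_def by (simp add: field_simps)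
qed

lemma st_ne:
  assumes x: "x > 0"
    and zw: "\<And>i. i < J \<Longrightarrow> w i = fmap x True (z i) \<and> z (Suc i) = fmap x False (w i) \<and> w i > x"
    and s: "st x z w j p c" and jJ: "j \<le> J"
  shows "c \<noteq> x"
proof (cases p)
  case False then show ?thesis using s x by (auto simp: st_def)
next
  case True
  show ?thesis
  proof (cases "j = 0")
    case True then show ?thesis using s x \<open>p\<close> by (auto simp: st_def)
  next
    case False
    then have "j - 1 < J" using jJ by simp
    then have "w (j - 1) > x" using zw by blast
    moreover have "c \<le> -1 \<or> w (j - 1) \<le> c" using s \<open>p\<close> False by (auto simp: st_def)
    ultimately show ?thesis using x by auto
  qed
qed

lemma invariant:
  assumes x: "x > 0" and z0: "z 0 \<le> 0"
    and zw: "\<And>i. i < J \<Longrightarrow> w i = fmap x True (z i) \<and> z (Suc i) = fmap x False (w i) \<and> w i > x"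
  shows "st x z w j p c \<Longrightarrow> j + starts p L \<le> J \<Longrightarrow> ok x c L \<and> run x c L \<noteq> x"
proof (induction L arbitrary: j p c)
  case Nil
  then show ?case using st_ne[where J=J and z=z and w=w, OF x zw] by simp
next
  case (Cons \<beta> L)
  have cx: "c \<noteq> x" using st_ne[where J=J and z=z and w=w, OF x zw Cons.prems(1)] Cons.prems(2) by simp
  have step: "\<exists>j'. st x z w j' \<beta> (fmap x \<beta> c) \<and> j' + starts \<beta> L \<le> J"
  proof (cases \<beta>)
    case bT: True
    show ?thesis
    proof (cases p)
      case False
      then have jJ: "j < J" and sb: "j + 1 + starts \<beta> L \<le> J" using Cons.prems bT by auto
      have zc: "z j \<le> c" "c \<le> 0" using Cons.prems False by (auto simp: st_def)
      have "w j \<le> fmap x True c" using zw[OF jJ] F1[OF x zc] by simp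
      then have "st x z w (j + 1) \<beta> (fmap x \<beta> c)" using bT by (simp add: st_def)
      then show ?thesis using sb by blast
    next
      case True
      have sb: "j + starts \<beta> L \<le> J" using Cons.prems bT True by auto
      show ?thesis
      proof (cases "j = 0")
        case True
        then have "c = -1" "z 0 = fmap x False (-1)" using Cons.prems \<open>p\<close> by (auto simp: st_def)
        then have "st x z w j \<beta> (fmap x \<beta> c)" using bT True f1_m1[OF x] by (simp add: st_def)
        then show ?thesis using sb by blast
      next
        case False
        then have "j - 1 < J" using Cons.prems by simp
        have "c \<le> -1 \<or> w (j - 1) \<le> c" using Cons.prems \<open>p\<close> False by (auto simp: st_def)
        then have "fmap x True c \<le> -1"
        proof
          assume "c \<le> -1" then show ?thesis using F4[OF x] by simp
        next
          assume "w (j - 1) \<le> c"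
          then have "c > x" using zw[OF \<open>j - 1 < J\<close>] by simp
          then show ?thesis using F3[OF x] by simp
        qed
        then have "st x z w j \<beta> (fmap x \<beta> c)" using bT False by (simp add: st_def)
        then show ?thesis using sb by blast
      qed
    qed
  next
    case bF: False
    have sb: "j + starts \<beta> L \<le> J" using Cons.prems bF by auto
    show ?thesis
    proof (cases p)
      case False
      have zc: "z j \<le> c" "c \<le> 0" using Cons.prems False by (auto simp: st_def)
      then have "st x z w j \<beta> (fmap x \<beta> c)" using bF F7[OF x zc(2)] by (simp add: st_def)
      then show ?thesis using sb by blast
    next
      case True
      show ?thesis
      proof (cases "j = 0")
        case True
        then have "c = -1" "z 0 = fmap x False (-1)" using Cons.prems \<open>p\<close> by (auto simp: st_def)
        then have "st x z w j \<beta> (fmap x \<beta> c)" using bF True z0 by (simp add: st_def)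
        then show ?thesis using sb by blast
      next
        case False
        then have jJ: "j - 1 < J" using Cons.prems by simp
        have zj: "z j = fmap x False (w (j - 1))" "w (j - 1) > x" using zw[OF jJ] False by auto
        have "c \<le> -1 \<or> w (j - 1) \<le> c" using Cons.prems \<open>p\<close> False by (auto simp: st_def)
        then have "z j \<le> fmap x False c \<and> fmap x False c \<le> 0"
        proof
          assume "c \<le> -1" then show ?thesis using F5[OF x] F6[OF x zj(2)] zj(1) by fastforce
        next
          assume "w (j - 1) \<le> c"
          then show ?thesis using F2[OF x zj(2)] zj(1) by fastforce
        qed
        then have "st x z w j \<beta> (fmap x \<beta> c)" using bF by (simp add: st_def)
        then show ?thesis using sb by blast
      qed
    qed
  qed
  then obtain j' where "st x z w j' \<beta> (fmap x \<beta> c)" "j' + starts \<beta> L \<le> J" by blast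
  from Cons.IH[OF this] cx show ?case by simp
qed

definition adjv :: "bool list \<Rightarrow> nat \<Rightarrow> nat \<Rightarrow> real" where
  "adjv b i j = (if threshold_adj b i j then 1 else 0)"

definition Nsys :: "bool list \<Rightarrow> real \<Rightarrow> real \<Rightarrow> (nat \<Rightarrow> real) \<Rightarrow> bool" where
  "Nsys b x c f = (\<forall>i < length b. (\<Sum>j<length b. (adjv b i j + c) * f j) = x * f i)"

definition sing :: "bool list \<Rightarrow> real \<Rightarrow> real \<Rightarrow> bool" where
  "sing b x c = (\<exists>f. (\<exists>i < length b. f i \<noteq> 0) \<and> Nsys b x c f)"

lemma fmap_alt: "c \<noteq> x \<Longrightarrow> fmap x \<beta> c = c - ((if \<beta> then 1 else 0) + c)^2 / (c - x)"
proof -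
  assume "c \<noteq> x"
  then have d: "c - x \<noteq> 0" by simp
  have e1: "c - (1 + c)^2 / (c - x) = (c * (c - x) - (1 + c)^2) / (c - x)"
    using d by (simp add: diff_divide_distrib)
  have e2: "c - (0 + c)^2 / (c - x) = (c * (c - x) - (0 + c)^2) / (c - x)"
    using d by (simp add: diff_divide_distrib)
  have n1: "c * (c - x) - (1 + c)^2 = - ((x + 2) * c + 1)" by (simp add: algebra_simps power2_eq_square)
  have n2: "c * (c - x) - (0 + c)^2 = - x * c" by (simp add: algebra_simps power2_eq_square)
  show ?thesis by (cases \<beta>) (simp_all only: if_True if_False e1 e2 n1 n2 fmap_def)
qed

lemma adjv_snoc:
  assumes "i < length b'" "j < length b'"
  shows "adjv (b' @ [\<beta>]) i j = adjv b' i j"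
    "adjv (b' @ [\<beta>]) i (length b') = (if \<beta> then 1 else 0)"
    "adjv (b' @ [\<beta>]) (length b') j = (if \<beta> then 1 else 0)"
  using assms by (auto simp: adjv_def threshold_adj_def nth_append max_def)

lemma adjv_snoc4: "adjv (b' @ [\<beta>]) (length b') (length b') = 0"
  by (simp add: adjv_def threshold_adj_def)

lemma sing_single: "sing [\<beta>] x c \<longleftrightarrow> c = x"
proof
  assume "sing [\<beta>] x c"
  then obtain f where "f 0 \<noteq> 0" "Nsys [\<beta>] x c f" unfolding sing_def by auto
  then have "c * f 0 = x * f 0" by (simp add: Nsys_def adjv_def threshold_adj_def)
  with \<open>f 0 \<noteq> 0\<close> show "c = x" by simp
next
  assume "c = x"
  then have "Nsys [\<beta>] x c (\<lambda>_. 1)" by (simp add: Nsys_def adjv_def threshold_adj_def)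
  then show "sing [\<beta>] x c" unfolding sing_def by (intro exI[of _ "\<lambda>_. 1"]) auto
qed

lemma elim:
  assumes ne: "b' \<noteq> []" and cx: "c \<noteq> x"
  shows "sing (b' @ [\<beta>]) x c \<longleftrightarrow> sing b' x (fmap x \<beta> c)"
proof -
  define m where "m = length b'"
  define B :: real where "B = (if \<beta> then 1 else 0)"
  define c' where "c' = fmap x \<beta> c"
  have c'eq: "c' = c - (B + c)^2 / (c - x)" unfolding c'_def B_def using fmap_alt[OF cx] by simp
  have d: "c - x \<noteq> 0" using cx by simp
  have lb: "length (b' @ [\<beta>]) = Suc m" by (simp add: m_def)
  have mm: "length b' = m" by (simp add: m_def)
  have A1: "\<And>i j. i < m \<Longrightarrow> j < m \<Longrightarrow> adjv (b' @ [\<beta>]) i j = adjv b' i j"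
    and A2: "\<And>i. i < m \<Longrightarrow> adjv (b' @ [\<beta>]) i m = B"
    and A3: "\<And>j. j < m \<Longrightarrow> adjv (b' @ [\<beta>]) m j = B"
    and A4: "adjv (b' @ [\<beta>]) m m = 0"
    using adjv_snoc adjv_snoc4 unfolding m_def B_def by auto
  have eqi: "(\<Sum>j<Suc m. (adjv (b' @ [\<beta>]) i j + c) * f j)
        = (\<Sum>j<m. (adjv b' i j + c) * f j) + (B + c) * f m" if "i < m" for i f
  proof -
    have "(\<Sum>j<m. (adjv (b' @ [\<beta>]) i j + c) * f j) = (\<Sum>j<m. (adjv b' i j + c) * f j)"
      using that A1 by (intro sum.cong) auto
    then show ?thesis using that by (simp add: A2)
  qed
  have eqm: "(\<Sum>j<Suc m. (adjv (b' @ [\<beta>]) m j + c) * f j)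
        = (B + c) * (\<Sum>j<m. f j) + c * f m" for f
  proof -
    have "(\<Sum>j<m. (adjv (b' @ [\<beta>]) m j + c) * f j) = (\<Sum>j<m. (B + c) * f j)"
      using A3 by (intro sum.cong) auto
    then show ?thesis by (simp add: A4 sum_distrib_left)
  qed
  have key: "(c' - c) * S = (B + c) * (- (B + c) * S / (c - x))" for S
  proof -
    have "(c' - c) * S = - ((B + c)^2 / (c - x)) * S" unfolding c'eq by simp
    also have "\<dots> = - ((B + c) * (B + c) * S) / (c - x)" by (simp add: power2_eq_square)
    also have "(B + c) * (- (B + c) * S) = - ((B + c) * (B + c) * S)" by (simp add: algebra_simps)
    then have "- ((B + c) * (B + c) * S) / (c - x) = (B + c) * (- (B + c) * S / (c - x))"
      by (simp only: times_divide_eq_right)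
    finally show ?thesis .
  qed
  have red: "(\<Sum>j<m. (adjv b' i j + c') * f j) = (\<Sum>j<m. (adjv b' i j + c) * f j) + (c' - c) * (\<Sum>j<m. f j)" for i f
  proof -
    have "(\<Sum>j<m. (adjv b' i j + c') * f j) = (\<Sum>j<m. (adjv b' i j + c) * f j + (c' - c) * f j)"
      by (intro sum.cong) (auto simp: algebra_simps)
    also have "\<dots> = (\<Sum>j<m. (adjv b' i j + c) * f j) + (c' - c) * (\<Sum>j<m. f j)"
      by (simp add: sum.distrib sum_distrib_left)
    finally show ?thesis .
  qed
  show ?thesis
  proof
    assume "sing (b' @ [\<beta>]) x c"
    then obtain f where nz: "\<exists>i < Suc m. f i \<noteq> 0" and N: "Nsys (b' @ [\<beta>]) x c f"
      unfolding sing_def lb by auto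
    define S where "S = (\<Sum>j<m. f j)"
    have h: "(B + c) * S + c * f m = x * f m" using N eqm[of f] unfolding Nsys_def lb S_def by auto
    have "f m * (c - x) = c * f m - x * f m" by (simp add: algebra_simps)
    with h have "f m * (c - x) = - (B + c) * S" by linarith
    then have fm: "f m = - (B + c) * S / (c - x)" using d by (simp add: eq_divide_eq)
    have Nb': "Nsys b' x c' f"
      unfolding Nsys_def
    proof (intro allI impI)
      fix i assume i: "i < length b'"
      then have "i < m" by (simp add: m_def)
      have "(\<Sum>j<m. (adjv b' i j + c) * f j) + (B + c) * f m = x * f i"
        using N eqi[OF \<open>i < m\<close>, of f] \<open>i < m\<close> unfolding Nsys_def lb by auto
      moreover have "(c' - c) * S = (B + c) * f m"
        unfolding fm by (rule key)
      ultimately show "(\<Sum>j<length b'. (adjv b' i j + c') * f j) = x * f i"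
        using red[of i f] unfolding S_def m_def by simp
    qed
    have "\<exists>i < m. f i \<noteq> 0"
    proof (rule ccontr)
      assume "\<not> (\<exists>i < m. f i \<noteq> 0)"
      then have z: "\<forall>i<m. f i = 0" by auto
      then have "S = 0" unfolding S_def by simp
      then have "f m = 0" using fm by simp
      with z nz show False using less_Suc_eq by auto
    qed
    then show "sing b' x (fmap x \<beta> c)" unfolding sing_def m_def c'_def[symmetric] using Nb' by auto
  next
    assume "sing b' x (fmap x \<beta> c)"
    then obtain g where nz: "\<exists>i < m. g i \<noteq> 0" and N: "Nsys b' x c' g"
      unfolding sing_def m_def c'_def by auto
    define S where "S = (\<Sum>j<m. g j)"
    define f where "f = (\<lambda>j. if j < m then g j else - (B + c) * S / (c - x))"
    have fm: "f m = - (B + c) * S / (c - x)" unfolding f_def by simp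
    have fS: "(\<Sum>j<m. f j) = S" unfolding S_def f_def by simp
    have fsum: "(\<Sum>j<m. (adjv b' i j + c'') * f j) = (\<Sum>j<m. (adjv b' i j + c'') * g j)" for i c''
      unfolding f_def by simp
    have "Nsys (b' @ [\<beta>]) x c f"
      unfolding Nsys_def lb
    proof (intro allI impI)
      fix i assume "i < Suc m"
      show "(\<Sum>j<Suc m. (adjv (b' @ [\<beta>]) i j + c) * f j) = x * f i"
      proof (cases "i < m")
        case True
        have "(\<Sum>j<m. (adjv b' i j + c') * g j) = x * g i"
          using N True unfolding Nsys_def m_def by auto
        moreover have "(c' - c) * S = (B + c) * f m"
          unfolding fm by (rule key)
        ultimately have "(\<Sum>j<m. (adjv b' i j + c) * g j) + (B + c) * f m = x * g i"
          using red[of i g] unfolding S_def by simp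
        moreover have "f i = g i" using True unfolding f_def by simp
        moreover have "(\<Sum>j<Suc m. (adjv (b' @ [\<beta>]) i j + c) * f j)
            = (\<Sum>j<m. (adjv b' i j + c) * g j) + (B + c) * f m"
          using eqi[OF True, of f] fsum[of i c] by simp
        ultimately show ?thesis by simp
      next
        case False
        then have "i = m" using \<open>i < Suc m\<close> by simp
        have "f m * (c - x) = - (B + c) * S" unfolding fm using d by simp
        moreover have "f m * (c - x) = c * f m - x * f m" by (simp add: algebra_simps)
        ultimately have "(B + c) * S + c * f m = x * f m" by linarith
        then show ?thesis using eqm[of f] \<open>i = m\<close> fS by simp
      qed
    qed
    moreover have "\<exists>i < length (b' @ [\<beta>]). f i \<noteq> 0" using nz unfolding f_def lb by auto
    ultimately show "sing (b' @ [\<beta>]) x c" unfolding sing_def by blast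
  qed
qed

lemma sing_run:
  assumes "b \<noteq> []" "ok x c (rev (tl b))"
  shows "sing b x c \<longleftrightarrow> run x c (rev (tl b)) = x"
  using assms
proof (induction b arbitrary: c rule: rev_induct)
  case Nil then show ?case by simp
next
  case (snoc \<beta> b')
  show ?case
  proof (cases "b' = []")
    case True then show ?thesis using sing_single by simp
  next
    case False
    have tl: "rev (tl (b' @ [\<beta>])) = \<beta> # rev (tl b')" using False by (cases b') auto
    have okc: "c \<noteq> x" "ok x (fmap x \<beta> c) (rev (tl b'))" using snoc.prems(2) unfolding tl by auto
    have "sing (b' @ [\<beta>]) x c \<longleftrightarrow> sing b' x (fmap x \<beta> c)" using elim[OF False okc(1)] .
    also have "\<dots> \<longleftrightarrow> run x (fmap x \<beta> c) (rev (tl b')) = x" using snoc.IH[OF False okc(2)] .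
    finally show ?thesis unfolding tl by simp
  qed
qed

lemma adjv_not: "i < length b \<Longrightarrow> j < length b \<Longrightarrow>
   adjv (map Not b) i j = (if i = j then 0 else 1 - adjv b i j)"
  by (auto simp: adjv_def threshold_adj_def max_def)

lemma Nsys_compl: "Nsys b y 0 f \<longleftrightarrow> Nsys (map Not b) (-1 - y) (-1) f"
proof -
  have key: "(\<Sum>j<length b. (adjv (map Not b) i j + -1) * f j)
      = - (\<Sum>j<length b. (adjv b i j + 0) * f j) - f i" if i: "i < length b" for i
  proof -
    have "(\<Sum>j<length b. (adjv (map Not b) i j + -1) * f j)
        = (\<Sum>j<length b. - (adjv b i j * f j) - (if i = j then f j else 0))"
      using i by (intro sum.cong) (auto simp: adjv_not adjv_def threshold_adj_def algebra_simps)
    also have "\<dots> = - (\<Sum>j<length b. adjv b i j * f j) - f i"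
      using i by (simp add: sum_subtractf sum.delta sum_negf)
    finally show ?thesis by simp
  qed
  show ?thesis unfolding Nsys_def length_map
  proof (intro iffI allI impI)
    fix i assume H: "\<forall>i<length b. (\<Sum>j<length b. (adjv b i j + 0) * f j) = y * f i" and i: "i < length b"
    show "(\<Sum>j<length b. (adjv (map Not b) i j + -1) * f j) = (-1 - y) * f i"
      using H i key[OF i] by (simp add: algebra_simps)
  next
    fix i assume H: "\<forall>i<length b. (\<Sum>j<length b. (adjv (map Not b) i j + -1) * f j) = (-1 - y) * f i"
      and i: "i < length b"
    have e: "- (\<Sum>j<length b. (adjv b i j + 0) * f j) - f i = (-1 - y) * f i"
      using H[rule_format, OF i] key[OF i] by simp
    show "(\<Sum>j<length b. (adjv b i j + 0) * f j) = y * f i"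
      using e by (simp add: algebra_simps)
  qed
qed

lemma sing_compl: "sing b y 0 \<longleftrightarrow> sing (map Not b) (-1 - y) (-1)"
  unfolding sing_def using Nsys_compl by simp

lemma mat_carrier: "threshold_adj_mat b \<in> carrier_mat (length b) (length b)"
  unfolding threshold_adj_mat_def by simp

lemma eig_sing: "graph_eigenvalue b y \<longleftrightarrow> sing b y 0"
proof -
  let ?A = "threshold_adj_mat b"
  let ?n = "length b"
  have dr: "dim_row ?A = ?n" unfolding threshold_adj_mat_def by simp
  have mv: "(?A *\<^sub>v v) $ i = (\<Sum>j<?n. adjv b i j * v $ j)" if "i < ?n" "v \<in> carrier_vec ?n" for i v
    using that unfolding threshold_adj_mat_def adjv_def
    by (auto simp: scalar_prod_def lessThan_atLeast0 intro!: sum.cong)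
  show ?thesis
  proof
    assume "graph_eigenvalue b y"
    then obtain v where v: "v \<in> carrier_vec ?n" "v \<noteq> 0\<^sub>v ?n" "?A *\<^sub>v v = y \<cdot>\<^sub>v v"
      unfolding graph_eigenvalue_def eigenvalue_def eigenvector_def dr by auto
    have "\<exists>i < ?n. v $ i \<noteq> 0"
    proof (rule ccontr)
      assume "\<not> ?thesis"
      then have "v = 0\<^sub>v ?n" using v(1) by (auto simp: vec_eq_iff)
      with v(2) show False by simp
    qed
    moreover have "Nsys b y 0 (\<lambda>j. v $ j)"
      unfolding Nsys_def
    proof (intro allI impI)
      fix i assume i: "i < ?n"
      have "(?A *\<^sub>v v) $ i = (y \<cdot>\<^sub>v v) $ i" using v(3) by simp
      then show "(\<Sum>j<?n. (adjv b i j + 0) * v $ j) = y * v $ i"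
        using mv[OF i v(1)] i v(1) by simp
    qed
    ultimately show "sing b y 0" unfolding sing_def by blast
  next
    assume "sing b y 0"
    then obtain f where f: "\<exists>i < ?n. f i \<noteq> 0" "Nsys b y 0 f" unfolding sing_def by auto
    let ?v = "vec ?n f"
    have vc: "?v \<in> carrier_vec ?n" by simp
    have "?v \<noteq> 0\<^sub>v ?n" using f(1) by (auto simp: vec_eq_iff)
    moreover have "?A *\<^sub>v ?v = y \<cdot>\<^sub>v ?v"
    proof (rule eq_vecI)
      show "dim_vec (?A *\<^sub>v ?v) = dim_vec (y \<cdot>\<^sub>v ?v)" using dr by simp
      fix i assume "i < dim_vec (y \<cdot>\<^sub>v ?v)"
      then have i: "i < ?n" by simp
      have "(\<Sum>j<?n. adjv b i j * ?v $ j) = (\<Sum>j<?n. (adjv b i j + 0) * f j)"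
        by (intro sum.cong) auto
      also have "\<dots> = y * f i" using f(2) i unfolding Nsys_def by auto
      finally show "(?A *\<^sub>v ?v) $ i = (y \<cdot>\<^sub>v ?v) $ i" using mv[OF i vc] i by simp
    qed
    ultimately show "graph_eigenvalue b y"
      unfolding graph_eigenvalue_def eigenvalue_def eigenvector_def dr using vc by blast
  qed
qed

lemma eig_finite: "finite {x. graph_eigenvalue b x}"
proof -
  let ?A = "threshold_adj_mat b"
  have "degree (char_poly ?A) = length b \<and> coeff (char_poly ?A) (length b) = 1"
    by (rule degree_monic_char_poly[OF mat_carrier])
  then have "char_poly ?A \<noteq> 0" by auto
  then have "finite {x. poly (char_poly ?A) x = 0}" by (rule poly_roots_finite)
  moreover have "{x. graph_eigenvalue b x} = {x. poly (char_poly ?A) x = 0}"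
    unfolding graph_eigenvalue_def using eigenvalue_root_char_poly[OF mat_carrier] by auto
  ultimately show ?thesis by simp
qed

definition stepPQ :: "bool \<Rightarrow> real \<Rightarrow> real \<times> real \<Rightarrow> real \<times> real" where
  "stepPQ \<beta> x pq = (if \<beta> then - (x + 2) * fst pq - snd pq else - x * fst pq, fst pq - x * snd pq)"

fun orb :: "(real \<Rightarrow> real) \<Rightarrow> (real \<Rightarrow> real) \<Rightarrow> nat \<Rightarrow> real \<Rightarrow> real \<times> real" where
  "orb p0 q0 0 x = (p0 x, q0 x)"
| "orb p0 q0 (Suc k) x = stepPQ (even k) x (orb p0 q0 k x)"

definition OP where "OP p0 q0 k x = fst (orb p0 q0 k x)"
definition OQ where "OQ p0 q0 k x = snd (orb p0 q0 k x)"

lemma OP_0[simp]: "OP p0 q0 0 x = p0 x" and OQ_0[simp]: "OQ p0 q0 0 x = q0 x"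
  by (simp_all add: OP_def OQ_def)

lemma OP_Suc: "OP p0 q0 (Suc k) x = (if even k then - (x + 2) * OP p0 q0 k x - OQ p0 q0 k x else - x * OP p0 q0 k x)"
  and OQ_Suc: "OQ p0 q0 (Suc k) x = OP p0 q0 k x - x * OQ p0 q0 k x"
  by (simp_all add: OP_def OQ_def stepPQ_def)

lemma orb_cont:
  assumes "\<And>x. isCont p0 x" "\<And>x. isCont q0 x"
  shows "isCont (OP p0 q0 k) x \<and> isCont (OQ p0 q0 k) x"
proof (induction k)
  case 0
  have "OP p0 q0 0 = p0" "OQ p0 q0 0 = q0" by (auto simp: fun_eq_iff)
  then show ?case using assms by simp
next
  case (Suc k)
  have e1: "OQ p0 q0 (Suc k) = (\<lambda>x. OP p0 q0 k x - x * OQ p0 q0 k x)" by (auto simp: fun_eq_iff OQ_Suc)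
  have e2: "OP p0 q0 (Suc k) = (if even k then (\<lambda>x. - (x + 2) * OP p0 q0 k x - OQ p0 q0 k x)
       else (\<lambda>x. - x * OP p0 q0 k x))" by (auto simp: fun_eq_iff OP_Suc)
  show ?case unfolding e1 e2 using Suc by (auto intro!: continuous_intros)
qed

definition sg :: "nat \<Rightarrow> real" where
  "sg k = (if k mod 4 = 0 \<or> k mod 4 = 3 then 1 else -1)"

lemma sg_sq: "sg k * sg k = 1" by (simp add: sg_def)

lemma sg_even: "even k \<Longrightarrow> sg (Suc k) = - sg k"
  unfolding sg_def by (auto; presburger)

lemma sg_odd: "odd k \<Longrightarrow> sg (Suc k) = sg k"
  unfolding sg_def by (auto; presburger)

lemma sg_odd3: "odd k \<Longrightarrow> sg (k + 3) = - sg k"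
  unfolding sg_def by (auto; presburger)

lemma sg_4: "sg (k + 4) = sg k"
  unfolding sg_def by auto

definition gg where "gg p0 q0 k x = sg k * OQ p0 q0 k x"

lemma base_inv:
  assumes x: "0 < x" "x \<le> 1/10" and q: "q0 x > 0" and p: "- x * q0 x \<le> p0 x" "p0 x \<le> 0"
  shows "sg k * OQ p0 q0 k x > 0 \<and>
         (even k \<longrightarrow> - 2 * x * (sg k * OQ p0 q0 k x) \<le> sg k * OP p0 q0 k x \<and> sg k * OP p0 q0 k x \<le> 0) \<and>
         (odd k \<longrightarrow> sg k * OP p0 q0 k x \<ge> 2 * x * (sg k * OQ p0 q0 k x))"
proof (induction k)
  case 0
  have "- 2 * x * q0 x \<le> - x * q0 x" using x q by (simp add: mult_left_mono)
  then show ?case using q p by (simp add: sg_def)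
next
  case (Suc k)
  define A where "A = sg k * OP p0 q0 k x"
  define B where "B = sg k * OQ p0 q0 k x"
  show ?case
  proof (cases "even k")
    case True
    have s: "sg (Suc k) = - sg k" using sg_even[OF True] .
    have IH: "B > 0" "- 2 * x * B \<le> A" "A \<le> 0" using Suc True unfolding A_def B_def by auto
    have Q': "sg (Suc k) * OQ p0 q0 (Suc k) x = x * B - A"
      unfolding s OQ_Suc A_def B_def by (simp add: algebra_simps)
    have P': "sg (Suc k) * OP p0 q0 (Suc k) x = (x + 2) * A + B"
      unfolding s OP_Suc A_def B_def using True by (simp add: algebra_simps)
    have "(3 * x + 2) * A \<ge> (3 * x + 2) * (- 2 * x * B)" using IH x by (intro mult_left_mono) auto
    moreover have "1 - 4 * x - 8 * x * x \<ge> 0"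
    proof -
      have "x * x \<le> (1/10) * (1/10)" using x by (intro mult_mono) auto
      then show ?thesis using x by simp
    qed
    then have "(1 - 4 * x - 8 * x * x) * B \<ge> 0" using IH by simp
    ultimately have "(x + 2) * A + B \<ge> 2 * x * (x * B - A)" by (simp add: algebra_simps)
    moreover have "x * B > 0" using IH x by simp
    then have "x * B - A > 0" using IH by linarith
    ultimately show ?thesis using Q' P' True by simp
  next
    case False
    have s: "sg (Suc k) = sg k" using sg_odd False by simp
    have IH: "B > 0" "A \<ge> 2 * x * B" using Suc False unfolding A_def B_def by auto
    have Q': "sg (Suc k) * OQ p0 q0 (Suc k) x = A - x * B"
      unfolding s OQ_Suc A_def B_def by (simp add: algebra_simps)
    have P': "sg (Suc k) * OP p0 q0 (Suc k) x = - x * A"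
      unfolding s OP_Suc A_def B_def using False by (simp add: algebra_simps)
    have "x * B > 0" using IH x by simp
    then have "A - x * B > 0" using IH by simp
    moreover have "A \<ge> 0" using IH x \<open>x * B > 0\<close> by linarith
    then have "- x * A \<le> 0" using x by (simp add: mult_nonneg_nonneg)
    moreover have "- 2 * x * (A - x * B) \<le> - x * A"
    proof -
      have "x * (2 * x * B) \<le> x * A" using IH x by (intro mult_left_mono) auto
      then show ?thesis by (simp add: algebra_simps)
    qed
    ultimately show ?thesis using Q' P' False by simp
  qed
qed

lemma base_pos:
  assumes "0 < x" "x \<le> 1/10" "q0 x > 0" "- x * q0 x \<le> p0 x" "p0 x \<le> 0"
  shows "gg p0 q0 k x > 0"
  using base_inv[of x q0 p0 k, OF assms] unfolding gg_def by blast

lemma Zlemma: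
  assumes x: "x > 0" and q: "q0 x > 0" and p: "p0 x \<le> 0"
    and k: "k \<ge> 1" "even (k - 1)" and g1: "gg p0 q0 (k - 1) x > 0"
    and g2: "k \<ge> 3 \<Longrightarrow> gg p0 q0 (k - 2) x > 0"
  shows "OQ p0 q0 k x \<noteq> 0"
proof (cases "k = 1")
  case True
  have "x * q0 x > 0" using x q by simp
  then show ?thesis using True p by (simp add: OQ_Suc[of _ _ 0, simplified])
next
  case False
  then have k3: "k \<ge> 3" using k by presburger
  define K where "K = k - 3"
  have K: "k = Suc (Suc (Suc K))" "odd (Suc K)" using k3 k(2) unfolding K_def by presburger+
  define P where "P = OP p0 q0 (Suc K) x"
  define Q where "Q = OQ p0 q0 (Suc K) x"
  have sg: "sg (Suc (Suc K)) = sg (Suc K)" using sg_odd[OF K(2)] .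
  have a: "sg (Suc K) * Q > 0" using g2 K unfolding gg_def Q_def by simp
  have b: "sg (Suc K) * (P - x * Q) > 0" using g1 K sg unfolding gg_def P_def Q_def by (simp add: OQ_Suc)
  have "(sg (Suc K) * Q) * (sg (Suc K) * (P - x * Q)) > 0" using a b by simp
  then have pq: "Q * (P - x * Q) > 0" using sg_sq[of "Suc K"] by (simp add: algebra_simps)
  have QQ: "OQ p0 q0 k x = - 2 * x * P + x * x * Q"
    using K by (simp add: OQ_Suc OP_Suc P_def Q_def algebra_simps)
  have "Q * (- 2 * x * P + x * x * Q) = - 2 * x * (Q * (P - x * Q)) - x * x * (Q * Q)"
    by (simp add: algebra_simps)
  moreover have "- 2 * x * (Q * (P - x * Q)) < 0" using x pq by (simp add: mult_pos_pos)
  moreover have "x * x * (Q * Q) \<ge> 0" by simp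
  moreover have "Q * OQ p0 q0 k x = Q * (- 2 * x * P + x * x * Q)" using QQ by simp
  ultimately have "Q * OQ p0 q0 k x < 0" by linarith
  then show ?thesis by auto
qed

lemma OP_Suc_odd: "odd k \<Longrightarrow> OP p0 q0 (Suc k) x = - x * OP p0 q0 k x"
  by (simp add: OP_Suc)

lemma OP_Suc_even: "even k \<Longrightarrow> OP p0 q0 (Suc k) x = - (x + 2) * OP p0 q0 k x - OQ p0 q0 k x"
  by (simp add: OP_Suc)

lemma Plemma:
  assumes K: "odd K" and z: "OQ p0 q0 (Suc K) x = 0"
  shows "OQ p0 q0 (K + 2) x = - x * x * OQ p0 q0 K x"
    "gg p0 q0 (K + 3) x = - (2 * x + 2) * (x * x) * gg p0 q0 K x"
    "gg p0 q0 (K + 4) x = - (3 * x + 4) * (x * x * x) * gg p0 q0 K x"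
proof -
  define Q where "Q = OQ p0 q0 K x"
  have K1: "even (Suc K)" "odd (Suc (Suc K))" "even (Suc (Suc (Suc K)))" using K by auto
  have P: "OP p0 q0 K x = x * Q" using z unfolding Q_def OQ_Suc by simp
  have P1: "OP p0 q0 (Suc K) x = - x * x * Q" unfolding OP_Suc_odd[OF K] P by simp
  have P2: "OP p0 q0 (Suc (Suc K)) x = (x + 2) * x * x * Q"
    unfolding OP_Suc_even[OF K1(1)] P1 z by (simp add: algebra_simps)
  have Q2: "OQ p0 q0 (Suc (Suc K)) x = - x * x * Q"
    unfolding OQ_Suc[of _ _ "Suc K"] P1 z by simp
  have P3: "OP p0 q0 (Suc (Suc (Suc K))) x = - (x + 2) * x * x * x * Q"
    unfolding OP_Suc_odd[OF K1(2)] P2 by (simp add: algebra_simps)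
  have Q3: "OQ p0 q0 (Suc (Suc (Suc K))) x = (2 * x + 2) * x * x * Q"
    unfolding OQ_Suc[of _ _ "Suc (Suc K)"] P2 Q2 by (simp add: algebra_simps)
  have Q4: "OQ p0 q0 (Suc (Suc (Suc (Suc K)))) x = - (3 * x + 4) * x * x * x * Q"
    unfolding OQ_Suc[of _ _ "Suc (Suc (Suc K))"] P3 Q3 by (simp add: algebra_simps)
  have e2: "K + 2 = Suc (Suc K)" and e3: "K + 3 = Suc (Suc (Suc K))" and e4: "K + 4 = Suc (Suc (Suc (Suc K)))"
    by simp_all
  show "OQ p0 q0 (K + 2) x = - x * x * OQ p0 q0 K x" unfolding e2 Q2 Q_def by simp
  have s3: "sg (Suc (Suc (Suc K))) = - sg K" using sg_odd3[OF K] e3 by simp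
  have s4: "sg (Suc (Suc (Suc (Suc K)))) = sg K" using sg_4[of K] e4 by simp
  show "gg p0 q0 (K + 3) x = - (2 * x + 2) * (x * x) * gg p0 q0 K x"
    unfolding gg_def e3 Q3 s3 Q_def by (simp add: algebra_simps)
  show "gg p0 q0 (K + 4) x = - (3 * x + 4) * (x * x * x) * gg p0 q0 K x"
    unfolding gg_def e4 Q4 s4 Q_def by (simp add: algebra_simps)
qed

lemma fmap_PQ:
  assumes "Q \<noteq> 0" "P - x * Q \<noteq> 0"
  shows "fmap x \<beta> (P / Q) = fst (stepPQ \<beta> x (P, Q)) / snd (stepPQ \<beta> x (P, Q))"
proof -
  have d: "P / Q - x = (P - x * Q) / Q" using assms by (simp add: field_simps)
  show ?thesis using assms unfolding fmap_def stepPQ_def d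
    by (cases \<beta>) (simp_all add: field_simps)
qed

lemma fmap_OPQ:
  assumes "OQ p0 q0 k x \<noteq> 0" "OQ p0 q0 (Suc k) x \<noteq> 0"
  shows "fmap x (even k) (OP p0 q0 k x / OQ p0 q0 k x) = OP p0 q0 (Suc k) x / OQ p0 q0 (Suc k) x"
proof -
  have "OP p0 q0 k x - x * OQ p0 q0 k x \<noteq> 0" using assms(2) by (simp add: OQ_Suc)
  from fmap_PQ[OF assms(1) this, of "even k"] show ?thesis
    by (simp add: OP_def OQ_def)
qed

lemma run_orb:
  assumes "\<forall>j \<le> m. OQ p0 q0 j x \<noteq> 0"
  shows "ok x (OP p0 q0 0 x / OQ p0 q0 0 x) (map even [0..<m])
     \<and> run x (OP p0 q0 0 x / OQ p0 q0 0 x) (map even [0..<m]) = OP p0 q0 m x / OQ p0 q0 m x"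
  using assms
proof (induction m)
  case 0 then show ?case by simp
next
  case (Suc m)
  have IH: "ok x (OP p0 q0 0 x / OQ p0 q0 0 x) (map even [0..<m])"
     "run x (OP p0 q0 0 x / OQ p0 q0 0 x) (map even [0..<m]) = OP p0 q0 m x / OQ p0 q0 m x"
    using Suc by auto
  have nz: "OQ p0 q0 m x \<noteq> 0" "OQ p0 q0 (Suc m) x \<noteq> 0" using Suc.prems by auto
  have ne: "OP p0 q0 m x / OQ p0 q0 m x \<noteq> x"
  proof
    assume "OP p0 q0 m x / OQ p0 q0 m x = x"
    then have "OP p0 q0 m x = x * OQ p0 q0 m x" using nz(1) by (simp add: divide_eq_eq)
    then show False using nz(2) by (simp add: OQ_Suc)
  qed
  show ?case using IH ne fmap_OPQ[OF nz]
    by (simp add: run_snoc ok_snoc)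
qed

lemma run_eq_x:
  assumes "OQ p0 q0 m x \<noteq> 0"
  shows "OP p0 q0 m x / OQ p0 q0 m x = x \<longleftrightarrow> OQ p0 q0 (Suc m) x = 0"
  using assms by (simp add: OQ_Suc divide_eq_eq)

lemma zw_rel:
  assumes x: "x > 0" and g: "\<forall>k \<le> 2 * J. gg p0 q0 k x > 0" and j: "j < J"
  shows "(\<lambda>i. OP p0 q0 (2*i+1) x / OQ p0 q0 (2*i+1) x) j = fmap x True ((\<lambda>i. OP p0 q0 (2*i) x / OQ p0 q0 (2*i) x) j)
    \<and> (\<lambda>i. OP p0 q0 (2*i) x / OQ p0 q0 (2*i) x) (Suc j) = fmap x False ((\<lambda>i. OP p0 q0 (2*i+1) x / OQ p0 q0 (2*i+1) x) j)
    \<and> (\<lambda>i. OP p0 q0 (2*i+1) x / OQ p0 q0 (2*i+1) x) j > x"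
proof -
  have nz: "OQ p0 q0 k x \<noteq> 0" if "k \<le> 2 * J" for k using g that unfolding gg_def by fastforce
  have n0: "OQ p0 q0 (2*j) x \<noteq> 0" "OQ p0 q0 (Suc (2*j)) x \<noteq> 0" "OQ p0 q0 (Suc (Suc (2*j))) x \<noteq> 0"
    using nz j by auto
  have r1: "fmap x True (OP p0 q0 (2*j) x / OQ p0 q0 (2*j) x) = OP p0 q0 (2*j+1) x / OQ p0 q0 (2*j+1) x"
    using fmap_OPQ[OF n0(1) n0(2)] by simp
  have r2: "fmap x False (OP p0 q0 (2*j+1) x / OQ p0 q0 (2*j+1) x) = OP p0 q0 (2*Suc j) x / OQ p0 q0 (2*Suc j) x"
    using fmap_OPQ[OF n0(2) n0(3)] by simp
  define P where "P = OP p0 q0 (2*j+1) x"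
  define Q where "Q = OQ p0 q0 (2*j+1) x"
  have sgs: "sg (Suc (2*j+1)) = sg (2*j+1)" by (rule sg_odd) simp
  have a: "sg (2*j+1) * Q > 0" using g j unfolding gg_def Q_def by simp
  have "gg p0 q0 (Suc (2*j+1)) x > 0" using g j by auto
  then have b: "sg (2*j+1) * (P - x * Q) > 0" using sgs unfolding gg_def P_def Q_def OQ_Suc by simp
  have "(sg (2*j+1) * Q) * (sg (2*j+1) * (P - x * Q)) > 0" using a b by simp
  then have pq: "Q * (P - x * Q) > 0" using sg_sq[of "2*j+1"] by (simp add: algebra_simps)
  have "Q \<noteq> 0" using pq by auto
  have "Q * P > Q * Q * x" using pq by (simp add: algebra_simps)
  then have "P / Q > x"
  proof -
    have e1: "P / Q - x = (P - x * Q) / Q" using \<open>Q \<noteq> 0\<close> by (simp add: diff_divide_distrib)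
    have e2: "(P - x * Q) / Q = Q * (P - x * Q) / (Q * Q)" using \<open>Q \<noteq> 0\<close> by simp
    have "Q * Q > 0" using \<open>Q \<noteq> 0\<close> by (metis not_real_square_gt_zero)
    then have "Q * (P - x * Q) / (Q * Q) > 0" using pq by (intro divide_pos_pos)
    then have "P / Q - x > 0" using e1 e2 by simp
    then show ?thesis by simp
  qed
  then show ?thesis using r1 r2 unfolding P_def Q_def by simp
qed

lemma pos_near:
  fixes f :: "real \<Rightarrow> real"
  assumes "isCont f a" "f a > 0"
  shows "\<exists>d>0. \<forall>y. dist y a < d \<longrightarrow> f y > 0"
proof -
  have "eventually (\<lambda>y. 0 < f y) (at a)"
    using assms unfolding isCont_def by (intro order_tendstoD(1)) auto
  then obtain d where d: "d > 0" "\<forall>y. y \<noteq> a \<and> dist y a < d \<longrightarrow> f y > 0"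
    unfolding eventually_at by auto
  then show ?thesis using assms(2) by (intro exI[of _ d]) auto
qed

lemma cont_arg:
  fixes g :: "nat \<Rightarrow> real \<Rightarrow> real"
  assumes fin: "finite I"
    and cont: "\<And>i x. i \<in> I \<Longrightarrow> isCont (g i) x"
    and base: "\<And>x i. 0 < x \<Longrightarrow> x \<le> 1/10 \<Longrightarrow> i \<in> I \<Longrightarrow> g i x > 0"
    and nz: "\<And>x. 0 < x \<Longrightarrow> x \<le> X \<Longrightarrow> \<forall>i\<in>I. g i x \<ge> 0 \<Longrightarrow> \<exists>i\<in>I. g i x = 0 \<Longrightarrow> False"
    and X: "X > 0"
  shows "\<forall>i\<in>I. g i X > 0"
proof (rule ccontr)
  assume nX: "\<not> (\<forall>i\<in>I. g i X > 0)"
  define F where "F = {x. 0 < x \<and> x \<le> X \<and> \<not> (\<forall>i\<in>I. g i x > 0)}"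
  have XF: "X \<in> F" using X nX unfolding F_def by auto
  then have Fne: "F \<noteq> {}" by auto
  have bdd: "bdd_below F" unfolding F_def by (rule bdd_belowI[of _ 0]) auto
  define s where "s = Inf F"
  have Fgt: "x > 1/10" if "x \<in> F" for x
  proof (rule ccontr)
    assume "\<not> x > 1/10"
    then have "\<forall>i\<in>I. g i x > 0" using that base unfolding F_def by auto
    then show False using that unfolding F_def by auto
  qed
  have s1: "s \<ge> 1/10" unfolding s_def using Fne Fgt by (intro cInf_greatest) (auto intro: less_imp_le)
  have sX: "s \<le> X" unfolding s_def using XF bdd by (rule cInf_lower)
  have below: "\<forall>i\<in>I. g i y > 0" if "0 < y" "y < s" for y
  proof (rule ccontr)
    assume "\<not> (\<forall>i\<in>I. g i y > 0)"
    then have "y \<in> F" using that sX unfolding F_def by auto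
    then have "s \<le> y" unfolding s_def using bdd by (rule cInf_lower)
    then show False using that by simp
  qed
  have nonneg: "\<forall>i\<in>I. g i s \<ge> 0"
  proof (rule ccontr)
    assume "\<not> (\<forall>i\<in>I. g i s \<ge> 0)"
    then obtain i where i: "i \<in> I" "g i s < 0" by auto
    have "isCont (\<lambda>y. - g i y) s" using cont[OF i(1)] by (intro continuous_intros)
    from pos_near[OF this] i(2) obtain d where d: "d > 0" "\<forall>y. dist y s < d \<longrightarrow> - g i y > 0" by auto
    define y where "y = s - min d s / 2"
    have "0 < y" "y < s" "dist y s < d" using d s1 unfolding y_def dist_real_def by auto
    then have "g i y > 0" "g i y < 0" using below i(1) d(2) by auto
    then show False by simp
  qed
  have allpos: "\<forall>i\<in>I. g i s > 0"
  proof (rule ccontr)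
    assume "\<not> (\<forall>i\<in>I. g i s > 0)"
    then have "\<exists>i\<in>I. g i s = 0" using nonneg by force
    then show False using nz[of s] s1 sX nonneg by auto
  qed
  have "eventually (\<lambda>y. \<forall>i\<in>I. g i y > 0) (at s)"
  proof (rule eventually_ball_finite[OF fin], intro ballI)
    fix i assume i: "i \<in> I"
    show "eventually (\<lambda>y. g i y > 0) (at s)"
      using cont[OF i] allpos i unfolding isCont_def by (intro order_tendstoD(1)) auto
  qed
  then obtain d where d: "d > 0" "\<forall>y. y \<noteq> s \<and> dist y s < d \<longrightarrow> (\<forall>i\<in>I. g i y > 0)"
    unfolding eventually_at by auto
  have "Inf F < s + d" using d(1) unfolding s_def by simp
  then obtain f where f: "f \<in> F" "f < s + d" using cInf_less_iff[OF Fne bdd] by auto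
  have "s \<le> f" unfolding s_def using f(1) bdd by (rule cInf_lower)
  then have "\<forall>i\<in>I. g i f > 0"
    using d f(2) allpos by (cases "f = s") (auto simp: dist_real_def)
  then show False using f(1) unfolding F_def by auto
qed

lemma cr_len: "length (concat (replicate m [False, True])) = 2 * m"
  by (induction m) auto

lemma cr_nth: "j < 2 * m \<Longrightarrow> concat (replicate m [False, True]) ! j = odd j"
proof (induction m arbitrary: j)
  case 0 then show ?case by simp
next
  case (Suc m)
  show ?case
  proof (cases "j < 2")
    case True
    then show ?thesis by (cases j) (auto simp: nth_append)
  next
    case False
    then have "j - 2 < 2 * m" using Suc.prems by simp
    then have "concat (replicate m [False, True]) ! (j - 2) = odd (j - 2)" by (rule Suc.IH)
    moreover have "odd (j - 2) = odd j" using False by presburger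
    ultimately show ?thesis using False by (simp add: nth_append numeral_2_eq_2)
  qed
qed

lemma ar_even: "even n \<Longrightarrow> antiregular_string n = concat (replicate (n div 2) [False, True])"
  by (simp add: antiregular_string_def)

lemma ar_len: "even n \<Longrightarrow> length (antiregular_string n) = n"
  by (simp add: ar_even cr_len)

lemma ar_nth: "even n \<Longrightarrow> j < n \<Longrightarrow> antiregular_string n ! j = odd j"
  by (simp add: ar_even cr_nth)

lemma parity_aux: fixes n i :: nat assumes "even n" "i < n - 1" shows "odd (n - 1 - i) = even i"
proof -
  have "n = (n - 1 - i) + Suc i" using assms(2) by linarith
  then have "even ((n - 1 - i) + Suc i)" using assms(1) by metis
  then show ?thesis by simp
qed

lemma ar_list1:
  assumes "even n" "n \<ge> 2"
  shows "rev (tl (antiregular_string n)) = map even [0..<n-1]"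
proof (rule nth_equalityI)
  have L: "length (antiregular_string n) = n" using assms(1) by (rule ar_len)
  show "length (rev (tl (antiregular_string n))) = length (map even [0..<n-1])"
    using L by simp
  fix i assume "i < length (rev (tl (antiregular_string n)))"
  then have i: "i < n - 1" using L by simp
  have "rev (tl (antiregular_string n)) ! i = tl (antiregular_string n) ! (n - 1 - Suc i)"
    using i L by (simp add: rev_nth)
  also have "\<dots> = antiregular_string n ! Suc (n - 1 - Suc i)"
    using i L by (simp add: nth_tl)
  also have "Suc (n - 1 - Suc i) = n - 1 - i" using i by linarith
  also have "antiregular_string n ! (n - 1 - i) = odd (n - 1 - i)" using i assms(1)
    by (intro ar_nth) auto
  also have "\<dots> = even i" using parity_aux[OF assms(1) i] .
  finally show "rev (tl (antiregular_string n)) ! i = map even [0..<n-1] ! i" using i by simp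
qed

lemma ar_list2:
  assumes "even n" "n \<ge> 2"
  shows "rev (tl (map Not (antiregular_string n))) = False # map even [0..<n-2]"
proof (rule nth_equalityI)
  have L: "length (antiregular_string n) = n" using assms(1) by (rule ar_len)
  show "length (rev (tl (map Not (antiregular_string n)))) = length (False # map even [0..<n-2])"
    using L assms(2) by simp
  fix i assume "i < length (rev (tl (map Not (antiregular_string n))))"
  then have i: "i < n - 1" using L by simp
  have "rev (tl (map Not (antiregular_string n))) ! i = tl (map Not (antiregular_string n)) ! (n - 1 - Suc i)"
    using i L by (simp add: rev_nth)
  also have "\<dots> = map Not (antiregular_string n) ! Suc (n - 1 - Suc i)"
    using i L by (simp add: nth_tl)
  also have "Suc (n - 1 - Suc i) = n - 1 - i" using i by linarith
  also have "map Not (antiregular_string n) ! (n - 1 - i) = (\<not> odd (n - 1 - i))" using i L assms(1)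
    by (simp add: ar_nth)
  also have "\<dots> = odd i" using parity_aux[OF assms(1) i] by simp
  also have "\<dots> = (False # map even [0..<n-2]) ! i"
    using i by (cases i) auto
  finally show "rev (tl (map Not (antiregular_string n))) ! i = (False # map even [0..<n-2]) ! i" .
qed

primrec tr :: "bool list \<Rightarrow> nat" where
  "tr [] = 0"
| "tr (a # l) = (if l \<noteq> [] \<and> \<not> a \<and> hd l then 1 else 0) + tr l"

lemma starts_snoc: "starts p (X @ [\<beta>]) = starts p X + (if \<beta> \<and> \<not> last (p # X) then 1 else 0)"
  by (induction X arbitrary: p) auto

lemma starts_tr: "starts True (rev (map Not l)) = tr l"
proof (induction l)
  case Nil then show ?case by simp
next
  case (Cons a l)
  have "last (True # rev (map Not l)) = (if l = [] then True else \<not> hd l)"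
    by (cases l) (auto simp: last_rev)
  then show ?case using Cons by (simp add: starts_snoc)
qed

lemma tr_append: "tr (xs @ ys) = tr xs + tr ys + (if xs \<noteq> [] \<and> ys \<noteq> [] \<and> \<not> last xs \<and> hd ys then 1 else 0)"
  by (induction xs) auto

lemma tr_repF: "tr (replicate s False) = 0"
  by (induction s) auto

lemma tr_repT: "tr (replicate s True) = 0"
  by (induction s) auto

lemma block_string_Suc:
  "block_string (Suc k) s t = block_string k s t @ (replicate (s k) False @ replicate (t k) True)"
  by (simp add: block_string_def)

lemma block_len: "length (block_string k s t) = (\<Sum>i<k. s i + t i)"
  by (induction k) (auto simp: block_string_Suc block_string_def)

lemma tr_blk: "s \<ge> 1 \<Longrightarrow> t \<ge> 1 \<Longrightarrow> tr (replicate s False @ replicate t True) = 1"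
  by (simp add: tr_append tr_repF tr_repT)

lemma tr_block: "k \<ge> 1 \<Longrightarrow> \<forall>i<k. s i \<ge> 1 \<and> t i \<ge> 1 \<Longrightarrow> tr (block_string k s t) = k
   \<and> block_string k s t \<noteq> [] \<and> last (block_string k s t) = True"
proof (induction k)
  case 0 then show ?case by simp
next
  case (Suc k)
  have b: "s k \<ge> 1" "t k \<ge> 1" using Suc.prems by auto
  show ?case
  proof (cases "k = 0")
    case True
    then show ?thesis using b by (simp add: block_string_def tr_blk)
  next
    case False
    then have IH: "tr (block_string k s t) = k" "block_string k s t \<noteq> []" "last (block_string k s t) = True"
      using Suc by auto
    have "replicate (s k) False @ replicate (t k) True \<noteq> []" using b by simp
    moreover have "last (replicate (s k) False @ replicate (t k) True) = True" using b by simp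
    ultimately show ?thesis using IH b
      by (simp add: block_string_Suc tr_append tr_blk tr_repF tr_repT)
  qed
qed

lemma block_first:
  assumes "k \<ge> 1" "\<forall>i<k. s i \<ge> 1 \<and> t i \<ge> 1"
  shows "\<exists>r. block_string k s t = (replicate (s 0) False @ replicate (t 0) True) @ r"
  using assms
proof (induction k)
  case 0 then show ?case by simp
next
  case (Suc k)
  show ?case
  proof (cases "k = 0")
    case True then show ?thesis by (simp add: block_string_def)
  next
    case False
    then obtain r where "block_string k s t = (replicate (s 0) False @ replicate (t 0) True) @ r"
      using Suc by auto
    then show ?thesis by (simp add: block_string_Suc)
  qed
qed

lemma sum_ge2: "\<forall>i<k. s i \<ge> (1::nat) \<and> t i \<ge> 1 \<Longrightarrow> (\<Sum>i<k. s i + t i) \<ge> 2 * k"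
proof -
  assume h: "\<forall>i<k. s i \<ge> (1::nat) \<and> t i \<ge> 1"
  have "(\<Sum>i<k. (2::nat)) \<le> (\<Sum>i<k. s i + t i)" using h by (intro sum_mono) auto
  then show ?thesis by simp
qed

lemma all_ones:
  "\<forall>i<k. s i \<ge> 1 \<and> t i \<ge> 1 \<Longrightarrow> (\<Sum>i<k. s i + t i) = 2 * k \<Longrightarrow>
   block_string k s t = concat (replicate k [False, True])"
proof (induction k)
  case 0 then show ?case by (simp add: block_string_def)
next
  case (Suc k)
  have h: "\<forall>i<k. s i \<ge> 1 \<and> t i \<ge> 1" using Suc.prems by auto
  have g1: "(\<Sum>i<k. s i + t i) \<ge> 2 * k" using sum_ge2[OF h] .
  have g2: "s k \<ge> 1" "t k \<ge> 1" using Suc.prems by auto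
  have "(\<Sum>i<k. s i + t i) + (s k + t k) = 2 * k + 2" using Suc.prems(2) by simp
  then have e: "(\<Sum>i<k. s i + t i) = 2 * k" "s k = 1" "t k = 1" using g1 g2 by linarith+
  have IH: "block_string k s t = concat (replicate k [False, True])" using Suc.IH[OF h e(1)] .
  have "concat (replicate (Suc k) [False, True]) = concat (replicate k [False, True] @ [[False, True]])"
    by (simp add: replicate_append_same)
  then show ?case using IH e by (simp add: block_string_Suc)
qed

lemma block_bound:
  assumes ev: "even n" and bf: "block_form b k s t" and len: "length b = n"
    and ne: "b \<noteq> antiregular_string n"
    and c: "s 0 = 1 \<or> (s 0 \<ge> 2 \<and> 2 * k + 2 < n)"
  shows "2 * starts True (rev (tl (map Not b))) + 4 \<le> n"
proof -
  have k: "k \<ge> 1" and st: "\<forall>i<k. s i \<ge> 1 \<and> t i \<ge> 1" and b: "b = block_string k s t"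
    using bf unfolding block_form_def by auto
  have trb: "tr b = k" using tr_block[OF k st] b by simp
  obtain r where r: "b = (replicate (s 0) False @ replicate (t 0) True) @ r"
    using block_first[OF k st] b by auto
  have s0: "s 0 \<ge> 1" "t 0 \<ge> 1" using st k by auto
  have stt: "starts True (rev (tl (map Not b))) = tr (tl b)"
    using starts_tr[of "tl b"] by (simp add: map_tl)
  have n: "n = (\<Sum>i<k. s i + t i)" using len b block_len by simp
  have n2: "n \<ge> 2 * k" using n sum_ge2[OF st] by simp
  obtain s' where s': "s 0 = Suc s'" using s0 by (cases "s 0") auto
  have bcons: "b = False # (replicate s' False @ replicate (t 0) True @ r)" using r s' by simp
  show ?thesis
  proof (cases "s 0 = 1")
    case True
    then have "s' = 0" using s' by simp
    then have tlb: "tl b = replicate (t 0) True @ r" using bcons by simp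
    obtain t' where t': "t 0 = Suc t'" using s0 by (cases "t 0") auto
    have "tr b = 1 + tr (tl b)" using bcons \<open>s' = 0\<close> t' by simp
    then have trt: "tr (tl b) = k - 1" using trb by simp
    have "n \<noteq> 2 * k"
    proof
      assume "n = 2 * k"
      then have "b = concat (replicate k [False, True])" using all_ones[OF st] n b by simp
      moreover have "antiregular_string n = concat (replicate k [False, True])"
        using ev \<open>n = 2 * k\<close> by (simp add: ar_even)
      ultimately show False using ne by simp
    qed
    then have "n \<ge> 2 * k + 2" using n2 ev by presburger
    then show ?thesis using stt trt k by simp
  next
    case False
    then have s2: "s 0 \<ge> 2" "2 * k + 2 < n" using c by auto
    then have "s' \<ge> 1" using s' by simp
    then obtain s'' where "s' = Suc s''" by (cases s') auto
    then have "tr b = tr (tl b)" using bcons by simp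
    then have "tr (tl b) = k" using trb by simp
    moreover have "2 * k + 4 \<le> n" using s2(2) ev by presburger
    ultimately show ?thesis using stt by simp
  qed
qed

lemma OPQ0_cont: "isCont (\<lambda>x. sg k * OQ p0 q0 k x) x" if "\<And>x. isCont p0 x" "\<And>x. isCont q0 x"
  using orb_cont[where k = k and x = x, OF that] by (intro continuous_intros) auto

lemma least_zero:
  fixes g :: "nat \<Rightarrow> real"
  assumes "\<exists>i\<in>I. g i = 0"
  obtains k where "k \<in> I" "g k = 0" "\<And>j. j < k \<Longrightarrow> j \<in> I \<Longrightarrow> g j \<noteq> 0"
proof -
  define k where "k = (LEAST k. k \<in> I \<and> g k = 0)"
  have "k \<in> I \<and> g k = 0" unfolding k_def using assms by (metis (mono_tags, lifting) LeastI)
  moreover have "\<And>j. j < k \<Longrightarrow> j \<in> I \<Longrightarrow> g j \<noteq> 0" unfolding k_def using not_less_Least by blast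
  ultimately show ?thesis using that by blast
qed

lemma part1_main:
  assumes n: "n \<ge> 2" "even n" and lb: "length b = n"
    and y: "y > 0" "graph_eigenvalue b y"
  shows "\<exists>z. graph_eigenvalue (antiregular_string n) z \<and> 0 < z \<and> z \<le> y"
proof (rule ccontr)
  assume H: "\<not> ?thesis"
  define p0 :: "real \<Rightarrow> real" where "p0 = (\<lambda>_. 0)"
  define q0 :: "real \<Rightarrow> real" where "q0 = (\<lambda>_. 1)"
  have cp: "\<And>x. isCont p0 x" "\<And>x. isCont q0 x" unfolding p0_def q0_def by auto
  let ?A = "antiregular_string n"
  have LA: "rev (tl ?A) = map even [0..<n-1]" using ar_list1 n by simp
  have lA: "length ?A = n" using ar_len n by simp
  have good: "\<forall>i\<in>{..n}. gg p0 q0 i y > 0"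
  proof (rule cont_arg[where g = "gg p0 q0"])
    show "finite {..n}" by simp
    show "\<And>i x. i \<in> {..n} \<Longrightarrow> isCont (gg p0 q0 i) x"
      unfolding gg_def[abs_def] using OPQ0_cont[OF cp] by simp
    show "\<And>x i. 0 < x \<Longrightarrow> x \<le> 1/10 \<Longrightarrow> i \<in> {..n} \<Longrightarrow> gg p0 q0 i x > 0"
      by (rule base_pos) (auto simp: p0_def q0_def)
    show "y > 0" using y by simp
  next
    fix x assume x: "0 < x" "x \<le> y" and ge: "\<forall>i\<in>{..n}. gg p0 q0 i x \<ge> 0"
      and ex: "\<exists>i\<in>{..n}. gg p0 q0 i x = 0"
    obtain k where k: "k \<in> {..n}" "gg p0 q0 k x = 0" "\<And>j. j < k \<Longrightarrow> j \<in> {..n} \<Longrightarrow> gg p0 q0 j x \<noteq> 0"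
      using least_zero[OF ex] by blast
    have pos: "gg p0 q0 j x > 0" if "j < k" for j
    proof -
      have jI: "j \<in> {..n}" using that k(1) by auto
      then show ?thesis using k(3)[OF that jI] ge by force
    qed
    have sgnz: "sg i \<noteq> 0" for i by (simp add: sg_def)
    have OQk: "OQ p0 q0 k x = 0" using k(2) sgnz unfolding gg_def by simp
    have k0: "k \<noteq> 0"
    proof
      assume "k = 0"
      then show False using OQk by (simp add: q0_def)
    qed
    show False
    proof (cases "even (k - 1)")
      case True
      have "OQ p0 q0 k x \<noteq> 0"
        by (rule Zlemma[of x q0 p0 k]) (use x k0 True pos in \<open>auto simp: p0_def q0_def\<close>)
      then show False using OQk by simp
    next
      case False
      define K where "K = k - 1"
      have K: "odd K" "OQ p0 q0 (Suc K) x = 0" "k = Suc K" using False OQk k0 unfolding K_def by auto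
      show False
      proof (cases "k = n")
        case True
        have nz: "\<forall>j \<le> n - 1. OQ p0 q0 j x \<noteq> 0"
        proof (intro allI impI)
          fix j assume "j \<le> n - 1"
          then have "j < k" using True n by simp
          then show "OQ p0 q0 j x \<noteq> 0" using pos[of j] unfolding gg_def by auto
        qed
        have R: "ok x (OP p0 q0 0 x / OQ p0 q0 0 x) (map even [0..<n-1])
           \<and> run x (OP p0 q0 0 x / OQ p0 q0 0 x) (map even [0..<n-1]) = OP p0 q0 (n-1) x / OQ p0 q0 (n-1) x"
          using run_orb[OF nz] .
        have c0: "OP p0 q0 0 x / OQ p0 q0 0 x = 0" by (simp add: p0_def q0_def)
        have "OP p0 q0 (n-1) x / OQ p0 q0 (n-1) x = x"
          using run_eq_x[of p0 q0 "n-1" x] nz OQk True n by simp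
        moreover have Ane: "?A \<noteq> []" using lA n by auto
        moreover have okA: "ok x 0 (rev (tl ?A))" unfolding LA using R[unfolded c0] by blast
        ultimately have "sing ?A x 0" using sing_run[OF Ane okA] R[unfolded c0] unfolding LA by simp
        then have "graph_eigenvalue ?A x" using eig_sing by simp
        then show False using H x by auto
      next
        case False
        have kn: "k \<le> n" using k(1) by simp
        have ek: "even k" using K(1,3) by simp
        from kn False ek n(2) have "k + 2 \<le> n" by presburger
        then have "K + 3 \<in> {..n}" using K(3) by simp
        then have "gg p0 q0 (K + 3) x \<ge> 0" using ge by blast
        moreover have "gg p0 q0 (K + 3) x = - (2 * x + 2) * (x * x) * gg p0 q0 K x"
          using Plemma(2)[OF K(1,2)] .
        moreover have "gg p0 q0 K x > 0" using pos K(3) by simp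
        moreover have "(2 * x + 2) * (x * x) > 0" using x by simp
        ultimately have "(2 * x + 2) * (x * x) * gg p0 q0 K x > 0" "gg p0 q0 (K + 3) x \<ge> 0"
          "gg p0 q0 (K + 3) x = - ((2 * x + 2) * (x * x) * gg p0 q0 K x)"
          by (auto intro: mult_pos_pos simp del: mult_minus_left minus_add_distrib)
        then show False by linarith
      qed
    qed
  qed
  define z where "z = (\<lambda>i. OP p0 q0 (2*i) y / OQ p0 q0 (2*i) y)"
  define w where "w = (\<lambda>i. OP p0 q0 (2*i+1) y / OQ p0 q0 (2*i+1) y)"
  define J where "J = n div 2"
  have g2: "\<forall>k \<le> 2 * J. gg p0 q0 k y > 0" using good n unfolding J_def by auto
  have zw: "\<And>i. i < J \<Longrightarrow> w i = fmap y True (z i) \<and> z (Suc i) = fmap y False (w i) \<and> w i > y"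
    unfolding z_def w_def using zw_rel[OF y(1) g2] by blast
  have z0: "z 0 = 0" unfolding z_def by (simp add: p0_def q0_def)
  have s0: "st y z w 0 False 0" unfolding st_def using z0 by simp
  have "starts False (rev (tl b)) \<le> J"
    using starts_bound[of False "rev (tl b)"] lb n unfolding J_def by simp
  then have "ok y 0 (rev (tl b)) \<and> run y 0 (rev (tl b)) \<noteq> y"
    using invariant[where J = J and z = z and w = w, OF y(1) _ zw s0] z0 by simp
  moreover have "b \<noteq> []" using lb n by auto
  ultimately have "\<not> sing b y 0" using sing_run[of b y 0] by simp
  then show False using y eig_sing by simp
qed

lemma f0_m1: "fmap x False (-1) = - x / (1 + x)"
proof -
  have a: "fmap x False (-1) = x / (-1 - x)" by (simp add: fmap_def)
  have e: "-1 - x = - (1 + x)" by simp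
  have b: "x / (-1 - x) = - (x / (1 + x))" by (simp only: e divide_minus_right)
  show ?thesis using a b by simp
qed

lemma part2_main:
  assumes n: "n \<ge> 2" "even n" and bf: "block_form b k s t" and lb: "length b = n"
    and c: "s 0 = 1 \<or> (s 0 \<ge> 2 \<and> 2 * k + 2 < n)"
    and y: "y < -1" "graph_eigenvalue b y"
  shows "\<exists>z. graph_eigenvalue (antiregular_string n) z \<and> y \<le> z \<and> z < -1"
proof (cases "b = antiregular_string n")
  case True then show ?thesis using y by auto
next
  case False
  show ?thesis
  proof (rule ccontr)
    assume H: "\<not> ?thesis"
    define X where "X = -1 - y"
    have X0: "X > 0" using y unfolding X_def by simp
    define L where "L = rev (tl (map Not b))"
    define J where "J = starts True L"
    have JB: "2 * J + 4 \<le> n" unfolding J_def L_def using block_bound[OF n(2) bf lb False c] .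
    define p0 :: "real \<Rightarrow> real" where "p0 = (\<lambda>x. - x)"
    define q0 :: "real \<Rightarrow> real" where "q0 = (\<lambda>x. 1 + x)"
    have cp: "\<And>x. isCont p0 x" "\<And>x. isCont q0 x" unfolding p0_def q0_def by auto
    let ?A = "antiregular_string n"
    have LA: "rev (tl (map Not ?A)) = False # map even [0..<n-2]" using ar_list2 n by simp
    have lA: "length ?A = n" using ar_len n by simp
    define I where "I = {..n-3} \<union> {n-1}"
    have good: "\<forall>i\<in>I. gg p0 q0 i X > 0"
    proof (rule cont_arg[where g = "gg p0 q0"])
      show "finite I" unfolding I_def by simp
      show "\<And>i x. i \<in> I \<Longrightarrow> isCont (gg p0 q0 i) x"
        unfolding gg_def[abs_def] using OPQ0_cont[OF cp] by simp
      show "\<And>x i. 0 < x \<Longrightarrow> x \<le> 1/10 \<Longrightarrow> i \<in> I \<Longrightarrow> gg p0 q0 i x > 0"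
        by (rule base_pos) (auto simp: p0_def q0_def)
      show "X > 0" using X0 .
    next
      fix x assume x: "0 < x" "x \<le> X" and ge: "\<forall>i\<in>I. gg p0 q0 i x \<ge> 0"
        and ex: "\<exists>i\<in>I. gg p0 q0 i x = 0"
      obtain k where k: "k \<in> I" "gg p0 q0 k x = 0" "\<And>j. j < k \<Longrightarrow> j \<in> I \<Longrightarrow> gg p0 q0 j x \<noteq> 0"
        using least_zero[OF ex] by blast
      have pos: "gg p0 q0 j x > 0" if "j < k" "j \<in> I" for j
        using k(3)[OF that] ge that by force
      have sgnz: "sg i \<noteq> 0" for i by (simp add: sg_def)
      have OQk: "OQ p0 q0 k x = 0" using k(2) sgnz unfolding gg_def by simp
      have k0: "k \<noteq> 0"
      proof
        assume "k = 0"
        then show False using OQk x by (simp add: q0_def)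
      qed
      have n4: "n \<ge> 4" using JB by simp
      show False
      proof (cases "k \<le> n - 3")
        case kle: True
        have pos': "gg p0 q0 j x > 0" if "j < k" for j
          using pos[OF that] that kle unfolding I_def by simp
        show False
        proof (cases "even (k - 1)")
          case True
          have "OQ p0 q0 k x \<noteq> 0"
            by (rule Zlemma[of x q0 p0 k]) (use x k0 True pos' in \<open>auto simp: p0_def q0_def\<close>)
          then show False using OQk by simp
        next
          case False
          define K where "K = k - 1"
          have K: "odd K" "OQ p0 q0 (Suc K) x = 0" "k = Suc K" using False OQk k0 unfolding K_def by auto
          have ek: "even k" using K(1,3) by simp
          have gK: "gg p0 q0 K x > 0" using pos' K(3) by simp
          show False
          proof (cases "k + 2 \<le> n - 3")
            case True
            then have "K + 3 \<in> I" using K(3) unfolding I_def by simp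
            then have "gg p0 q0 (K + 3) x \<ge> 0" using ge by blast
            moreover have "gg p0 q0 (K + 3) x = - (2 * x + 2) * (x * x) * gg p0 q0 K x"
              using Plemma(2)[OF K(1,2)] .
            ultimately have "(2 * x + 2) * (x * x) * gg p0 q0 K x > 0" "gg p0 q0 (K + 3) x \<ge> 0"
              "gg p0 q0 (K + 3) x = - ((2 * x + 2) * (x * x) * gg p0 q0 K x)"
              using gK x by (auto intro: mult_pos_pos simp del: mult_minus_left minus_add_distrib)
            then show False by linarith
          next
            case False
            from False kle ek n(2) n4 have "k + 3 = n - 1" by presburger
            then have "K + 4 \<in> I" using K(3) unfolding I_def by simp
            then have "gg p0 q0 (K + 4) x \<ge> 0" using ge by blast
            moreover have "gg p0 q0 (K + 4) x = - (3 * x + 4) * (x * x * x) * gg p0 q0 K x"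
              using Plemma(3)[OF K(1,2)] .
            ultimately have "(3 * x + 4) * (x * x * x) * gg p0 q0 K x > 0" "gg p0 q0 (K + 4) x \<ge> 0"
              "gg p0 q0 (K + 4) x = - ((3 * x + 4) * (x * x * x) * gg p0 q0 K x)"
              using gK x by (auto intro: mult_pos_pos simp del: mult_minus_left minus_add_distrib)
            then show False by linarith
          qed
        qed
      next
        case False
        then have kn: "k = n - 1" using k(1) unfolding I_def by auto
        have posl: "OQ p0 q0 j x \<noteq> 0" if "j \<le> n - 3" for j
        proof -
          have "j < k" "j \<in> I" using that kn n4 unfolding I_def by auto
          then show ?thesis using pos unfolding gg_def by fastforce
        qed
        have q2: "OQ p0 q0 (n - 2) x \<noteq> 0"
        proof
          assume z: "OQ p0 q0 (n - 2) x = 0"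
          define K where "K = n - 3"
          have K: "odd K" "OQ p0 q0 (Suc K) x = 0" using n(2) n4 z unfolding K_def
            by (presburger, simp add: Suc_diff_Suc numeral_3_eq_3 numeral_2_eq_2)
          have "OQ p0 q0 (K + 2) x = - x * x * OQ p0 q0 K x" using Plemma(1)[OF K] .
          moreover have "K + 2 = k" using kn n4 unfolding K_def by simp
          moreover have "OQ p0 q0 K x \<noteq> 0" using posl unfolding K_def by simp
          ultimately show False using OQk x by simp
        qed
        have nz: "\<forall>j \<le> n - 2. OQ p0 q0 j x \<noteq> 0"
        proof (intro allI impI)
          fix j assume "j \<le> n - 2"
          then have "j \<le> n - 3 \<or> j = n - 2" by linarith
          then show "OQ p0 q0 j x \<noteq> 0" using posl q2 by blast
        qed
        have R: "ok x (OP p0 q0 0 x / OQ p0 q0 0 x) (map even [0..<n-2])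
           \<and> run x (OP p0 q0 0 x / OQ p0 q0 0 x) (map even [0..<n-2]) = OP p0 q0 (n-2) x / OQ p0 q0 (n-2) x"
          using run_orb[OF nz] .
        have c0: "OP p0 q0 0 x / OQ p0 q0 0 x = fmap x False (-1)" by (simp add: p0_def q0_def f0_m1)
        have "Suc (n - 2) = k" using kn n4 by simp
        then have "OP p0 q0 (n-2) x / OQ p0 q0 (n-2) x = x"
          using run_eq_x[of p0 q0 "n-2" x] q2 OQk by simp
        then have R2: "ok x (fmap x False (-1)) (map even [0..<n-2])"
          "run x (fmap x False (-1)) (map even [0..<n-2]) = x" using R[unfolded c0] by auto
        have okA: "ok x (-1) (rev (tl (map Not ?A)))" unfolding LA using R2 x by simp
        have runA: "run x (-1) (rev (tl (map Not ?A))) = x" unfolding LA using R2 by simp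
        have Ane: "map Not ?A \<noteq> []" using lA n by auto
        have "sing (map Not ?A) x (-1)" using sing_run[OF Ane okA] runA by simp
        then have "sing ?A (-1 - x) 0" using sing_compl[of ?A "-1 - x"] by simp
        then have "graph_eigenvalue ?A (-1 - x)" using eig_sing by simp
        moreover have "y \<le> -1 - x" "-1 - x < -1" using x unfolding X_def by auto
        ultimately show False using H by blast
      qed
    qed
    define z where "z = (\<lambda>i. OP p0 q0 (2*i) X / OQ p0 q0 (2*i) X)"
    define w where "w = (\<lambda>i. OP p0 q0 (2*i+1) X / OQ p0 q0 (2*i+1) X)"
    have g2: "\<forall>k \<le> 2 * J. gg p0 q0 k X > 0" using good JB unfolding I_def by auto
    have zw: "\<And>i. i < J \<Longrightarrow> w i = fmap X True (z i) \<and> z (Suc i) = fmap X False (w i) \<and> w i > X"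
      unfolding z_def w_def using zw_rel[OF X0 g2] by blast
    have z0: "z 0 = fmap X False (-1)" unfolding z_def by (simp add: p0_def q0_def f0_m1)
    have z0n: "z 0 \<le> 0" unfolding z0 f0_m1 using X0 by simp
    have s0: "st X z w 0 True (-1)" unfolding st_def using z0 by simp
    have "ok X (-1) L \<and> run X (-1) L \<noteq> X"
      using invariant[where J = J and z = z and w = w, OF X0 z0n zw s0] unfolding J_def by simp
    moreover have "map Not b \<noteq> []" using lb n by auto
    ultimately have "\<not> sing (map Not b) X (-1)" using sing_run[of "map Not b" X "-1"] unfolding L_def by simp
    then have "\<not> sing b y 0" using sing_compl[of b y] unfolding X_def by simp
    then show False using y eig_sing by simp
  qed
qed

lemma fin_sub: "finite {x. graph_eigenvalue b x \<and> P x}"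
  using eig_finite[of b] by (rule rev_finite_subset) auto

theorem theorem4p2:
  fixes n :: nat
  assumes "n \<ge> 2" and "even n"
  shows
    "(\<forall>b. is_threshold_string b \<and> length b = n
          \<and> {x. graph_eigenvalue b x \<and> x > 0} \<noteq> {}
        \<longrightarrow> mu_plus (antiregular_string n) \<le> mu_plus b)
     \<and> (\<forall>b k s t. block_form b k s t \<and> length b = n \<and> s 0 = 1
          \<and> {x. graph_eigenvalue b x \<and> x < -1} \<noteq> {}
        \<longrightarrow> mu_minus b \<le> mu_minus (antiregular_string n))
     \<and> (\<forall>b k s t. block_form b k s t \<and> length b = n \<and> s 0 \<ge> 2 \<and> 2 * k + 2 < n
          \<and> {x. graph_eigenvalue b x \<and> x < -1} \<noteq> {}
        \<longrightarrow> mu_minus b \<le> mu_minus (antiregular_string n))"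
proof -
  have P1: "mu_plus (antiregular_string n) \<le> mu_plus b"
    if h1: "length b = n" "{x. graph_eigenvalue b x \<and> x > 0} \<noteq> {}" for b
  proof -
    let ?S = "{x. graph_eigenvalue b x \<and> x > 0}"
    let ?T = "{x. graph_eigenvalue (antiregular_string n) x \<and> x > 0}"
    have "Min ?S \<in> ?S" using fin_sub h1(2) by (rule Min_in)
    then have y: "graph_eigenvalue b (Min ?S)" "Min ?S > 0" by auto
    obtain z where z: "graph_eigenvalue (antiregular_string n) z" "0 < z" "z \<le> Min ?S"
      using part1_main[OF assms h1(1) y(2,1)] by blast
    have "Min ?T \<le> z" using fin_sub z by (intro Min_le) auto
    then show ?thesis using z(3) unfolding mu_plus_def by simp
  qed
  have P2: "mu_minus b \<le> mu_minus (antiregular_string n)"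
    if h2: "block_form b k s t" "length b = n" "s 0 = 1 \<or> (s 0 \<ge> 2 \<and> 2 * k + 2 < n)"
      "{x. graph_eigenvalue b x \<and> x < -1} \<noteq> {}" for b k s t
  proof -
    let ?S = "{x. graph_eigenvalue b x \<and> x < -1}"
    let ?T = "{x. graph_eigenvalue (antiregular_string n) x \<and> x < -1}"
    have "Max ?S \<in> ?S" using fin_sub h2(4) by (rule Max_in)
    then have y: "graph_eigenvalue b (Max ?S)" "Max ?S < -1" by auto
    obtain z where z: "graph_eigenvalue (antiregular_string n) z" "Max ?S \<le> z" "z < -1"
      using part2_main[OF assms h2(1,2,3) y(2,1)] by blast
    have "z \<le> Max ?T" using fin_sub z by (intro Max_ge) auto
    then show ?thesis using z(2) unfolding mu_minus_def by simp
  qed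
  show ?thesis using P1 P2 by blast
qed

end
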